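(* Let $f\in C^2(\mathbb T,\mathbb R)$ be non-degenerate and set $\underline{\eta}_f:=\min_{x}\eta_f(x)>0$. Then $$\mathcal H^0(\{f=0\})\le\frac1\pi\int_0^{2\pi}\frac{|f''(x)|}{\eta_f(x)}\,dx+2\le 2\Big(\frac{\|f''\|_\infty}{\underline{\eta}_f}+1\Big),$$ and also $$\mathcal H^0(\{f=0\})\le\frac12\int_0^{2\pi}\mathbf 1_{\{|f'(x)/f(x)|\le1\}}\frac{|f''(x)|}{|f(x)|}\,dx+\pi,$$ where the indicator is taken to be $0$ at points where $f(x)=0$.
   Context: $\mathbb T=\mathbb R/2\pi\mathbb Z$, functions on $\mathbb T$ are identified with $2\pi$-periodic functions on $\mathbb R$, and $\mathcal H^0(\{f=0\})$ is the number of zeros of $f$ in one period $[0,2\pi)$. $\eta_f(x):=\sqrt{f(x)^2+f'(x)^2}$; $f$ is non-degenerate if $\min_x\eta_f(x)>0$. $\|f''\|_\infty=\sup_x|f''(x)|$. *)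

theory Defs
  imports "HOL-Analysis.Analysis"
begin

text \<open>Functions on the torus are 2pi-periodic real functions.\<close>
definition periodic_2pi :: "(real \<Rightarrow> real) \<Rightarrow> bool" where
  "periodic_2pi f \<longleftrightarrow> (\<forall>x. f (x + 2*pi) = f x)"

definition C2 :: "(real \<Rightarrow> real) \<Rightarrow> bool" where
  "C2 f \<longleftrightarrow> (\<forall>x. f differentiable (at x)) \<and> (\<forall>x. deriv f differentiable (at x))
            \<and> continuous_on UNIV (deriv (deriv f))"

definition eta :: "(real \<Rightarrow> real) \<Rightarrow> real \<Rightarrow> real" where
  "eta f x = sqrt ((f x)\<^sup>2 + (deriv f x)\<^sup>2)"

definition eta_min :: "(real \<Rightarrow> real) \<Rightarrow> real" where
  "eta_min f = (INF x. eta f x)"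

definition sup_norm :: "(real \<Rightarrow> real) \<Rightarrow> real" where
  "sup_norm g = (SUP x. \<bar>g x\<bar>)"

definition zero_set :: "(real \<Rightarrow> real) \<Rightarrow> real set" where
  "zero_set f = {x \<in> {0..<2*pi}. f x = 0}"

definition log_integrand :: "(real \<Rightarrow> real) \<Rightarrow> real \<Rightarrow> real" where
  "log_integrand f x = (if f x \<noteq> 0 \<and> \<bar>deriv f x / f x\<bar> \<le> 1
      then \<bar>deriv (deriv f) x\<bar> / \<bar>f x\<bar> else 0)"

end

theory Submission
  imports Defs
begin
lemma near_zero:
  fixes f f1 :: "real \<Rightarrow> real"
  assumes D1: "\<And>x. (f has_real_derivative f1 x) (at x)"
    and cf1: "continuous_on UNIV f1"
    and fz: "f z = 0" and nz: "f1 z \<noteq> 0"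
  shows "\<exists>d>0. \<forall>x. x \<noteq> z \<and> \<bar>x - z\<bar> < d \<longrightarrow> f x \<noteq> 0 \<and> f1 x * (x - z) / f x \<ge> 1/2"
proof -
  have t1: "((\<lambda>y. f y / (y - z)) \<longlongrightarrow> f1 z) (at z)"
    using D1[of z] fz unfolding has_field_derivative_iff by simp
  have t2: "(f1 \<longlongrightarrow> f1 z) (at z)"
    using cf1 by (simp add: continuous_on_def)
  have t3: "((\<lambda>y. f1 y / (f y / (y - z))) \<longlongrightarrow> f1 z / f1 z) (at z)"
    by (rule tendsto_divide[OF t2 t1 nz])
  have e1: "\<forall>\<^sub>F y in at z. 1/2 < f1 y / (f y / (y - z))"
    by (rule order_tendstoD(1)[OF t3]) (simp add: nz)
  have e2: "\<forall>\<^sub>F y in at z. f y / (y - z) \<noteq> 0"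
    using tendsto_imp_eventually_ne[OF t1 nz] .
  have "\<forall>\<^sub>F y in at z. f y \<noteq> 0 \<and> f1 y * (y - z) / f y \<ge> 1/2"
    using e1 e2 by eventually_elim (auto simp: field_simps)
  then obtain d where "d > 0" "\<forall>x\<in>UNIV. x \<noteq> z \<and> dist x z < d \<longrightarrow> f x \<noteq> 0 \<and> f1 x * (x - z) / f x \<ge> 1/2"
    unfolding eventually_at by blast
  then show ?thesis by (auto simp: dist_real_def)
qed
lemma interval_ends:
  fixes f f1 :: "real \<Rightarrow> real"
  assumes D1: "\<And>x. (f has_real_derivative f1 x) (at x)"
    and cf1: "continuous_on UNIV f1"
    and ND: "\<And>x. f x = 0 \<Longrightarrow> f1 x \<noteq> 0"
    and uv: "u < v" and fu: "f u = 0" and fv: "f v = 0" and M: "M > 0"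
  shows "\<exists>p q. u < p \<and> p < q \<and> q < v \<and> f1 p / f p \<ge> M \<and> f1 q / f q \<le> - M"
proof -
  obtain d1 where d1: "d1 > 0" "\<forall>x. x \<noteq> u \<and> \<bar>x - u\<bar> < d1 \<longrightarrow> f x \<noteq> 0 \<and> f1 x * (x - u) / f x \<ge> 1/2"
    using near_zero[OF D1 cf1 fu ND[OF fu]] by blast
  obtain d2 where d2: "d2 > 0" "\<forall>x. x \<noteq> v \<and> \<bar>x - v\<bar> < d2 \<longrightarrow> f x \<noteq> 0 \<and> f1 x * (x - v) / f x \<ge> 1/2"
    using near_zero[OF D1 cf1 fv ND[OF fv]] by blast
  define t where "t = min (d1/2) (min ((v-u)/3) (1/(2*M)))"
  define s where "s = min (d2/2) (min ((v-u)/3) (1/(2*M)))"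
  have t0: "t > 0" "t < d1" "t \<le> (v-u)/3" "t \<le> 1/(2*M)" using d1 uv M unfolding t_def
    by (auto simp del: divide_const_simps)
  have s0: "s > 0" "s < d2" "s \<le> (v-u)/3" "s \<le> 1/(2*M)" using d2 uv M unfolding s_def
    by (auto simp del: divide_const_simps)
  have A: "f (u+t) \<noteq> 0" "f1 (u+t) * t / f (u+t) \<ge> 1/2" using d1(2)[rule_format, of "u+t"] t0 by auto
  have B: "f (v-s) \<noteq> 0" "f1 (v-s) * (-s) / f (v-s) \<ge> 1/2" using d2(2)[rule_format, of "v-s"] s0 by auto
  have "f1 (u+t) / f (u+t) \<ge> 1/(2*t)"
  proof -
    have e: "f1 (u+t) / f (u+t) = (f1 (u+t) * t / f (u+t)) / t" using t0 by simp
    have "(1/2) / t \<le> (f1 (u+t) * t / f (u+t)) / t"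
      by (rule divide_right_mono) (use A t0 in auto)
    then show ?thesis using e by simp
  qed
  moreover have "1/(2*t) \<ge> M" using t0 M by (simp add: field_simps)
  moreover have "f1 (v-s) / f (v-s) \<le> -1/(2 * s)"
  proof -
    have e: "f1 (v-s) / f (v-s) = - ((f1 (v-s) * (-s) / f (v-s)) / s)" using s0 by simp
    have "(1/2) / s \<le> (f1 (v-s) * (-s) / f (v-s)) / s"
      by (rule divide_right_mono) (use B s0 in auto)
    then show ?thesis using e by simp
  qed
  moreover have "1/(2 * s) \<ge> M" using s0 M by (simp add: field_simps)
  ultimately show ?thesis using t0 s0 uv
    by (intro exI[of _ "u+t"] exI[of _ "v-s"]) auto
qed

lemma selection:
  fixes w :: "real \<Rightarrow> real"
  assumes cw: "continuous_on {p..q} w" and pq: "p \<le> q" and wp: "w p \<ge> 1" and wq: "w q \<le> -1"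
  shows "\<exists>x1 x2. p \<le> x1 \<and> x1 \<le> x2 \<and> x2 \<le> q \<and> w x1 = 1 \<and> w x2 = -1 \<and> (\<forall>x\<in>{x1..x2}. \<bar>w x\<bar> \<le> 1)"
proof -
  define T where "T = {p..q} \<inter> w -` {..-1}"
  have Tc: "closed T" unfolding T_def by (rule continuous_closed_preimage[OF cw]) auto
  have qT: "q \<in> T" using pq wq by (auto simp: T_def)
  have Tb: "bdd_below T" unfolding T_def by (rule bdd_belowI[of _ p]) auto
  define x2 where "x2 = Inf T"
  have x2T: "x2 \<in> T" unfolding x2_def using closed_contains_Inf[OF _ Tb Tc] qT by blast
  have x2q: "x2 \<le> q" unfolding x2_def using cInf_lower[OF qT Tb] .
  have px2: "p \<le> x2" "w x2 \<le> -1" using x2T by (auto simp: T_def)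
  obtain y where y: "y \<ge> p" "y \<le> x2" "w y = -1"
    using IVT2'[of w x2 "-1" p] px2 wp continuous_on_subset[OF cw, of "{p..x2}"] x2q by force
  have "y \<in> T" using y x2q by (auto simp: T_def)
  then have "x2 \<le> y" unfolding x2_def using cInf_lower[OF _ Tb] by blast
  then have wx2: "w x2 = -1" using y by simp
  define U where "U = {p..x2} \<inter> w -` {1..}"
  have Uc: "closed U" unfolding U_def
    by (rule continuous_closed_preimage[OF continuous_on_subset[OF cw]]) (use x2q in auto)
  have pU: "p \<in> U" using px2 wp by (auto simp: U_def)
  have Ub: "bdd_above U" unfolding U_def by (rule bdd_aboveI[of _ x2]) auto
  define x1 where "x1 = Sup U"
  have x1U: "x1 \<in> U" unfolding x1_def using closed_contains_Sup[OF _ Ub Uc] pU by blast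
  have px1: "p \<le> x1" unfolding x1_def using cSup_upper[OF pU Ub] .
  have x1x2: "x1 \<le> x2" "w x1 \<ge> 1" using x1U by (auto simp: U_def)
  obtain y' where y': "y' \<ge> x1" "y' \<le> x2" "w y' = 1"
    using IVT2'[of w x2 1 x1] x1x2 wx2 continuous_on_subset[OF cw, of "{x1..x2}"] x2q px1 by force
  have "y' \<in> U" using y' px1 by (auto simp: U_def)
  then have "y' \<le> x1" unfolding x1_def using cSup_upper[OF _ Ub] by blast
  then have wx1: "w x1 = 1" using y' by simp
  have "\<bar>w x\<bar> \<le> 1" if x: "x \<in> {x1..x2}" for x
  proof (rule ccontr)
    assume "\<not> \<bar>w x\<bar> \<le> 1"
    then consider "w x < -1" | "w x > 1" by linarith
    then show False
    proof cases
      case 1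
      then have "x \<in> T" using x px1 x2q by (auto simp: T_def)
      then have "x2 \<le> x" unfolding x2_def using cInf_lower[OF _ Tb] by blast
      then show False using x 1 wx2 by simp
    next
      case 2
      then have "x \<in> U" using x px1 by (auto simp: U_def)
      then have "x \<le> x1" unfolding x1_def using cSup_upper[OF _ Ub] by blast
      then show False using x 2 wx1 by simp
    qed
  qed
  then show ?thesis using px1 x1x2 x2q wx1 wx2 by blast
qed

lemma ineq1:
  fixes a b c :: real
  assumes E: "a^2 + b^2 > 0"
  shows "- ((c * a - b * b) / (a^2 + b^2)) \<le> 1 + \<bar>c\<bar> / sqrt (a^2 + b^2)"
proof -
  define E where "E = a^2 + b^2"
  define r where "r = sqrt E"
  have E0: "E > 0" using E by (simp add: E_def)
  have r0: "r > 0" using E0 by (simp add: r_def)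
  have rE: "r * r = E" using E0 by (simp add: r_def)
  have ar: "\<bar>a\<bar> \<le> r" unfolding r_def E_def by (rule real_le_rsqrt) (simp add: power2_abs)
  have t1: "b * b / E \<le> 1" using E0 by (simp add: E_def power2_eq_square)
  have "- (c * a) \<le> \<bar>c\<bar> * \<bar>a\<bar>" by (simp add: abs_mult[symmetric])
  also have "\<dots> \<le> \<bar>c\<bar> * r" using ar by (simp add: mult_left_mono)
  finally have "- (c * a) / E \<le> \<bar>c\<bar> * r / E" using E0 by (intro divide_right_mono) auto
  also have "\<bar>c\<bar> * r / E = \<bar>c\<bar> / r" using rE[symmetric] r0 by simp
  finally have t2: "- (c * a) / E \<le> \<bar>c\<bar> / r" .
  have "- ((c * a - b * b) / E) = b * b / E + (- (c * a) / E)" using E0 by (simp add: field_simps)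
  then show ?thesis using t1 t2 unfolding E_def[symmetric] r_def[symmetric] by linarith
qed

lemma ineq2:
  fixes a b c :: real
  assumes a: "a \<noteq> 0" and w: "\<bar>b / a\<bar> \<le> 1"
  shows "- ((c * a - b * b) / (a * a)) \<le> 1 + \<bar>c\<bar> / \<bar>a\<bar>"
proof -
  have e: "- ((c * a - b * b) / (a * a)) = (b/a)^2 - c / a" using a by (simp add: field_simps power2_eq_square)
  have "(b/a)^2 \<le> 1" using w by (metis abs_le_square_iff abs_one one_power2)
  moreover have "- (c / a) \<le> \<bar>c\<bar> / \<bar>a\<bar>" by (metis abs_divide abs_ge_minus_self)
  ultimately have "(b/a)^2 - c / a \<le> 1 + \<bar>c\<bar> / \<bar>a\<bar>" by linarith
  then show ?thesis using e by simp
qed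

lemma arctan_deriv_alg:
  fixes a b N :: real
  assumes a: "a \<noteq> 0"
  shows "inverse (1 + (b / a)^2) * (N / a ^ Suc (Suc 0)) = N / (a^2 + b^2)"
proof -
  have pos: "a^2 + b^2 > 0" using a by (simp add: add_pos_nonneg)
  have "1 + (b/a)^2 = (a^2 + b^2) / a^2" using a by (simp add: field_simps)
  then have "inverse (1 + (b / a)^2) = a^2 / (a^2 + b^2)" by simp
  then show ?thesis using a pos by (simp add: power2_eq_square)
qed

lemma ftc_bound:
  fixes phi dphi g :: "real \<Rightarrow> real"
  assumes D: "\<And>x. x \<in> {p..q} \<Longrightarrow> (phi has_real_derivative dphi x) (at x)"
    and B: "\<And>x. x \<in> {p..q} \<Longrightarrow> - dphi x \<le> 1 + g x"
    and gi: "g integrable_on {u..v}" and g0: "\<And>x. 0 \<le> g x"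
    and ord: "u \<le> p" "p \<le> q" "q \<le> v"
  shows "phi p - phi q \<le> (v - u) + integral {u..v} g"
proof -
  have ftc: "(dphi has_integral phi q - phi p) {p..q}"
    by (rule fundamental_theorem_of_calculus[OF ord(2)])
       (auto simp: has_real_derivative_iff_has_vector_derivative[symmetric] intro!: has_field_derivative_at_within D)
  have I1: "((\<lambda>x. - dphi x) has_integral (phi p - phi q)) {p..q}"
    using has_integral_neg[OF ftc] by simp
  have gi': "g integrable_on {p..q}" using integrable_on_subinterval[OF gi] ord by auto
  have I2: "((\<lambda>x. 1 + g x) has_integral ((q - p) + integral {p..q} g)) {p..q}"
    using has_integral_add[OF has_integral_const_real[of 1 p q] integrable_integral[OF gi']] ord
    by simp
  have "phi p - phi q \<le> (q - p) + integral {p..q} g"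
    by (rule has_integral_le[OF I1 I2 B])
  moreover have "integral {p..q} g \<le> integral {u..v} g"
    by (rule integral_subset_le[OF _ gi' gi]) (use ord g0 in auto)
  ultimately show ?thesis using ord by linarith
qed

lemma part1_interval:
  fixes f f1 f2 :: "real \<Rightarrow> real"
  assumes D1: "\<And>x. (f has_real_derivative f1 x) (at x)"
    and D2: "\<And>x. (f1 has_real_derivative f2 x) (at x)"
    and cf2: "continuous_on UNIV f2"
    and ND: "\<And>x. f x = 0 \<Longrightarrow> f1 x \<noteq> 0"
    and uv: "u < v" and fu: "f u = 0" and fv: "f v = 0"
    and nz: "\<And>x. x \<in> {u<..<v} \<Longrightarrow> f x \<noteq> 0"
  shows "pi \<le> (v - u) + integral {u..v} (\<lambda>x. \<bar>f2 x\<bar> / sqrt ((f x)^2 + (f1 x)^2))"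
proof -
  define g where "g = (\<lambda>x. \<bar>f2 x\<bar> / sqrt ((f x)^2 + (f1 x)^2))"
  have cf: "continuous_on UNIV f" using D1 by (meson DERIV_isCont continuous_at_imp_continuous_on)
  have cf1: "continuous_on UNIV f1" using D2 by (meson DERIV_isCont continuous_at_imp_continuous_on)
  have pos: "(f x)^2 + (f1 x)^2 > 0" for x using ND[of x] by (cases "f x = 0") (auto simp: add_pos_nonneg)
  have cg: "continuous_on UNIV g" unfolding g_def
    using pos by (intro continuous_intros cf cf1 cf2) (use ND in auto)
  have gi: "g integrable_on {u..v}" by (rule integrable_continuous_real[OF continuous_on_subset[OF cg]]) auto
  have g0: "0 \<le> g x" for x unfolding g_def by simp
  define R where "R = (v - u) + integral {u..v} g"
  have key: "2 * arctan M \<le> R" if M: "M > 0" for M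
  proof -
    obtain p q where pq: "u < p" "p < q" "q < v" "f1 p / f p \<ge> M" "f1 q / f q \<le> - M"
      using interval_ends[OF D1 cf1 ND uv fu fv M] by blast
    define h where "h = (\<lambda>x. arctan (f1 x / f x))"
    define H where "H = (\<lambda>x. (f2 x * f x - f1 x * f1 x) / ((f x)^2 + (f1 x)^2))"
    have DH: "(h has_real_derivative H x) (at x)" if x: "x \<in> {p..q}" for x
    proof -
      have fx: "f x \<noteq> 0" using nz[of x] x pq by auto
      have d: "((\<lambda>y. f1 y / f y) has_real_derivative (f2 x * f x - f1 x * f1 x) / f x ^ Suc (Suc 0)) (at x)"
        by (rule DERIV_quotient[OF D2 D1 fx])
      have "(h has_real_derivative inverse (1 + (f1 x / f x)^2) * ((f2 x * f x - f1 x * f1 x) / f x ^ Suc (Suc 0))) (at x)"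
        unfolding h_def by (rule DERIV_chain2[OF DERIV_arctan d])
      moreover have "inverse (1 + (f1 x / f x)^2) * ((f2 x * f x - f1 x * f1 x) / f x ^ Suc (Suc 0)) = H x"
        using arctan_deriv_alg[OF fx] unfolding H_def by simp
      ultimately show ?thesis by (rule DERIV_cong)
    qed
    have B: "- H x \<le> 1 + g x" if "x \<in> {p..q}" for x
      unfolding H_def g_def using ineq1[OF pos[of x], of "f2 x"] by (simp add: mult.commute)
    have "h p - h q \<le> R" unfolding R_def
      by (rule ftc_bound[OF DH B gi g0]) (use pq in auto)
    moreover have "h p \<ge> arctan M" unfolding h_def using pq by (simp add: arctan_le_iff)
    moreover have "h q \<le> - arctan M" unfolding h_def using pq by (simp add: arctan_le_iff flip: arctan_minus)
    ultimately show ?thesis by linarith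
  qed
  have lim: "((\<lambda>M. 2 * arctan M) \<longlongrightarrow> 2 * (pi/2)) at_top"
    by (intro tendsto_intros tendsto_arctan_at_top)
  have "2 * (pi/2) \<le> R"
    by (rule tendsto_le[OF trivial_limit_at_top_linorder tendsto_const lim])
       (use eventually_gt_at_top[of "0::real"] in \<open>rule eventually_mono, use key in auto\<close>)
  then show ?thesis unfolding R_def g_def by simp
qed

lemma part2_interval:
  fixes f f1 f2 :: "real \<Rightarrow> real"
  assumes D1: "\<And>x. (f has_real_derivative f1 x) (at x)"
    and D2: "\<And>x. (f1 has_real_derivative f2 x) (at x)"
    and ND: "\<And>x. f x = 0 \<Longrightarrow> f1 x \<noteq> 0"
    and uv: "u < v" and fu: "f u = 0" and fv: "f v = 0"
    and nz: "\<And>x. x \<in> {u<..<v} \<Longrightarrow> f x \<noteq> 0"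
    and Li: "(\<lambda>x. if f x \<noteq> 0 \<and> \<bar>f1 x / f x\<bar> \<le> 1 then \<bar>f2 x\<bar> / \<bar>f x\<bar> else 0) integrable_on {u..v}"
  shows "2 \<le> (v - u) + integral {u..v} (\<lambda>x. if f x \<noteq> 0 \<and> \<bar>f1 x / f x\<bar> \<le> 1 then \<bar>f2 x\<bar> / \<bar>f x\<bar> else 0)"
proof -
  define L where "L = (\<lambda>x. if f x \<noteq> 0 \<and> \<bar>f1 x / f x\<bar> \<le> 1 then \<bar>f2 x\<bar> / \<bar>f x\<bar> else 0)"
  have cf: "continuous_on UNIV f" using D1 by (meson DERIV_isCont continuous_at_imp_continuous_on)
  have cf1: "continuous_on UNIV f1" using D2 by (meson DERIV_isCont continuous_at_imp_continuous_on)
  have L0: "0 \<le> L x" for x unfolding L_def by simp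
  obtain p q where pq: "u < p" "p < q" "q < v" "f1 p / f p \<ge> 1" "f1 q / f q \<le> - 1"
    using interval_ends[OF D1 cf1 ND uv fu fv, of 1] by auto
  define w where "w = (\<lambda>x. f1 x / f x)"
  have fnz: "f x \<noteq> 0" if "x \<in> {p..q}" for x using nz[of x] that pq by auto
  have cw: "continuous_on {p..q} w" unfolding w_def
    by (intro continuous_intros continuous_on_subset[OF cf] continuous_on_subset[OF cf1]) (auto dest: fnz)
  obtain x1 x2 where xs: "p \<le> x1" "x1 \<le> x2" "x2 \<le> q" "w x1 = 1" "w x2 = -1" "\<forall>x\<in>{x1..x2}. \<bar>w x\<bar> \<le> 1"
    using selection[OF cw] pq unfolding w_def by (smt (verit))
  define H where "H = (\<lambda>x. (f2 x * f x - f1 x * f1 x) / f x ^ Suc (Suc 0))"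
  have DH: "(w has_real_derivative H x) (at x)" if x: "x \<in> {x1..x2}" for x
    unfolding w_def H_def by (rule DERIV_quotient[OF D2 D1 fnz]) (use x xs in auto)
  have B: "- H x \<le> 1 + L x" if x: "x \<in> {x1..x2}" for x
  proof -
    have fx: "f x \<noteq> 0" using fnz x xs by auto
    have wx: "\<bar>f1 x / f x\<bar> \<le> 1" using xs(6) x unfolding w_def by auto
    show ?thesis unfolding H_def L_def using ineq2[OF fx wx, of "f2 x"] fx wx by (simp add: power2_eq_square)
  qed
  have "w x1 - w x2 \<le> (v - u) + integral {u..v} L"
    by (rule ftc_bound[OF DH B Li[folded L_def] L0]) (use xs pq in auto)
  then show ?thesis using xs unfolding L_def by simp
qed

lemma sum_consec:
  fixes Z :: "real set" and g :: "real \<Rightarrow> real"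
  assumes "finite Z" "card Z = Suc n"
    and "\<And>u v. u \<in> Z \<Longrightarrow> v \<in> Z \<Longrightarrow> u < v \<Longrightarrow> (\<forall>z\<in>Z. z \<le> u \<or> v \<le> z) \<Longrightarrow> c \<le> (v - u) + integral {u..v} g"
    and "g integrable_on {Min Z..Max Z}"
  shows "real n * c \<le> (Max Z - Min Z) + integral {Min Z..Max Z} g"
  using assms
proof (induction n arbitrary: Z)
  case 0
  then obtain a where "Z = {a}" by (metis One_nat_def card_1_singletonE)
  then show ?case by simp
next
  case (Suc n)
  define B where "B = Max Z"
  define Z' where "Z' = Z - {B}"
  have ne: "Z \<noteq> {}" using Suc.prems(2) by auto
  have BZ: "B \<in> Z" unfolding B_def using Suc.prems(1) ne by simp
  have fZ': "finite Z'" "card Z' = Suc n" unfolding Z'_def using Suc.prems(1,2) BZ by auto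
  have ne': "Z' \<noteq> {}" using fZ' by auto
  have Z'Z: "Z' \<subseteq> Z" unfolding Z'_def by auto
  define A where "A = Min Z"
  define B' where "B' = Max Z'"
  have B'Z': "B' \<in> Z'" unfolding B'_def using fZ' ne' by simp
  have B'B: "B' < B"
  proof -
    have "B' \<le> B" unfolding B_def using B'Z' Z'Z Suc.prems(1) by auto
    moreover have "B' \<noteq> B" using B'Z' unfolding Z'_def by auto
    ultimately show ?thesis by simp
  qed
  have AZ: "A \<in> Z" unfolding A_def using Suc.prems(1) ne by simp
  have AB: "A \<le> B'" unfolding A_def using B'Z' Z'Z Suc.prems(1) by auto
  have AZ': "A \<in> Z'" unfolding Z'_def using AB B'B AZ by auto
  have minZ': "Min Z' = A"
  proof -
    have "Min Z' \<le> A" using AZ' fZ' by simp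
    moreover have "Min Z' \<in> Z" using Z'Z fZ' ne' Min_in by blast
    then have "A \<le> Min Z'" unfolding A_def using Suc.prems(1) by simp
    ultimately show ?thesis by simp
  qed
  have gi: "g integrable_on {A..B}" using Suc.prems(4) unfolding A_def B_def .
  have IH: "real n * c \<le> (B' - A) + integral {A..B'} g"
  proof -
    have "real n * c \<le> (Max Z' - Min Z') + integral {Min Z'..Max Z'} g"
    proof (rule Suc.IH[OF fZ'])
      fix u v assume uv: "u \<in> Z'" "v \<in> Z'" "u < v" "\<forall>z\<in>Z'. z \<le> u \<or> v \<le> z"
      have "\<forall>z\<in>Z. z \<le> u \<or> v \<le> z"
      proof
        fix z assume z: "z \<in> Z"
        show "z \<le> u \<or> v \<le> z"
        proof (cases "z = B")
          case True
          have "v \<le> B'" unfolding B'_def using uv fZ' by simp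
          then show ?thesis using True B'B by simp
        next
          case False
          then show ?thesis using uv(4) z unfolding Z'_def by auto
        qed
      qed
      then show "c \<le> (v - u) + integral {u..v} g" using Suc.prems(3)[of u v] uv Z'Z by blast
    next
      show "g integrable_on {Min Z'..Max Z'}" unfolding minZ' B'_def[symmetric]
        by (rule integrable_on_subinterval[OF gi]) (use B'B in auto)
    qed
    then show ?thesis unfolding minZ' B'_def .
  qed
  have last: "c \<le> (B - B') + integral {B'..B} g"
  proof (rule Suc.prems(3)[OF _ BZ B'B])
    show "B' \<in> Z" using B'Z' Z'Z by auto
    show "\<forall>z\<in>Z. z \<le> B' \<or> B \<le> z"
    proof
      fix z assume z: "z \<in> Z"
      show "z \<le> B' \<or> B \<le> z"
      proof (cases "z = B")
        case True then show ?thesis by simp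
      next
        case False
        then have "z \<in> Z'" using z unfolding Z'_def by auto
        then show ?thesis unfolding B'_def using fZ' by simp
      qed
    qed
  qed
  have comb: "integral {A..B'} g + integral {B'..B} g = integral {A..B} g"
    by (rule Henstock_Kurzweil_Integration.integral_combine[OF AB _ gi]) (use B'B in simp)
  have "real (Suc n) * c = real n * c + c" by (simp add: algebra_simps)
  also have "\<dots> \<le> (B - A) + integral {A..B} g" using IH last comb by linarith
  finally show ?case unfolding A_def B_def .
qed

lemma finite_zeros:
  fixes f f1 :: "real \<Rightarrow> real"
  assumes D1: "\<And>x. (f has_real_derivative f1 x) (at x)"
    and cf1: "continuous_on UNIV f1"
    and ND: "\<And>x. f x = 0 \<Longrightarrow> f1 x \<noteq> 0"
  shows "finite {x \<in> {a..b}. f x = 0}"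
proof (rule ccontr)
  define T where "T = {x \<in> {a..b}. f x = 0}"
  assume "infinite {x \<in> {a..b}. f x = 0}"
  then have inf: "infinite T" unfolding T_def .
  obtain x where x: "x \<in> {a..b}" "x islimpt T"
    using compact_eq_Bolzano_Weierstrass[of "{a..b}"] inf unfolding T_def by auto
  have cf: "continuous_on UNIV f" using D1 by (meson DERIV_isCont continuous_at_imp_continuous_on)
  have cl: "closed {x. f x = 0}" by (rule closed_Collect_eq[OF cf continuous_on_const])
  have "x islimpt {x. f x = 0}" by (rule islimpt_subset[OF x(2)]) (auto simp: T_def)
  then have fx: "f x = 0" using cl closed_limpt by blast
  obtain d where d: "d > 0" "\<forall>y. y \<noteq> x \<and> \<bar>y - x\<bar> < d \<longrightarrow> f y \<noteq> 0 \<and> f1 y * (y - x) / f y \<ge> 1/2"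
    using near_zero[OF D1 cf1 fx ND[OF fx]] by blast
  have "\<forall>\<^sub>F y in at x. y \<notin> T"
    unfolding eventually_at using d by (intro exI[of _ d]) (auto simp: T_def dist_real_def)
  then show False using x(2) islimpt_iff_eventually by blast
qed

lemma periodic_deriv:
  fixes g g' :: "real \<Rightarrow> real"
  assumes per: "\<And>x. g (x + 2*pi) = g x" and D: "\<And>x. (g has_real_derivative g' x) (at x)"
  shows "g' (x + 2*pi) = g' x"
proof -
  have "((\<lambda>y. g (y + 2*pi)) has_real_derivative g' (x + 2*pi)) (at x)"
    using D[of "x + 2*pi"] by (simp add: DERIV_shift)
  then have "(g has_real_derivative g' (x + 2*pi)) (at x)" using per by simp
  then show ?thesis using D[of x] DERIV_unique by blast
qed

lemma periodic_nat:
  fixes g :: "real \<Rightarrow> real"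
  assumes per: "\<And>x. g (x + 2*pi) = g x"
  shows "g (x + real n * (2*pi)) = g x"
proof (induction n)
  case 0 then show ?case by simp
next
  case (Suc n)
  have "x + real (Suc n) * (2*pi) = (x + real n * (2*pi)) + 2*pi" by (simp add: algebra_simps)
  then have "g (x + real (Suc n) * (2*pi)) = g (x + real n * (2*pi))" using per by metis
  then show ?case using Suc by simp
qed

lemma periodic_int:
  fixes g :: "real \<Rightarrow> real"
  assumes per: "\<And>x. g (x + 2*pi) = g x"
  shows "g (x + real_of_int k * (2*pi)) = g x"
proof (cases "k \<ge> 0")
  case True
  define n where "n = nat k"
  have e1: "x + real_of_int k * (2*pi) = x + real n * (2*pi)" using True by (simp add: n_def)
  show ?thesis unfolding e1 by (rule periodic_nat[of g, OF per])
next
  case False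
  define n where "n = nat (-k)"
  have e1: "x + real_of_int k * (2*pi) = x - real n * (2*pi)" using False by (simp add: n_def)
  have e2: "g (x - real n * (2*pi) + real n * (2*pi)) = g (x - real n * (2*pi))"
    by (rule periodic_nat[of g, OF per])
  have e3: "x - real n * (2*pi) + real n * (2*pi) = x" by simp
  show ?thesis unfolding e1 using e2 unfolding e3 by simp
qed

lemma periodic_bdd:
  fixes g :: "real \<Rightarrow> real"
  assumes per: "\<And>x. g (x + 2*pi) = g x" and cg: "continuous_on UNIV g"
  shows "bdd_above (range (\<lambda>x. \<bar>g x\<bar>))"
proof -
  have "compact (g ` {0..2*pi})"
    by (rule compact_continuous_image[OF continuous_on_subset[OF cg]]) auto
  then obtain B where B: "\<forall>y\<in>g ` {0..2*pi}. norm y \<le> B"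
    using compact_imp_bounded bounded_iff by metis
  have "\<bar>g x\<bar> \<le> B" for x
  proof -
    define k where "k = \<lfloor>x / (2*pi)\<rfloor>"
    define y where "y = x - real_of_int k * (2*pi)"
    have k1: "real_of_int k \<le> x / (2*pi)" unfolding k_def by linarith
    have k2: "x / (2*pi) < real_of_int k + 1" unfolding k_def by linarith
    have "real_of_int k * (2*pi) \<le> x" using k1 by (simp add: field_simps)
    moreover have "x < (real_of_int k + 1) * (2*pi)" using k2 by (simp add: field_simps)
    ultimately have y: "y \<in> {0..2*pi}" unfolding y_def by (auto simp: algebra_simps)
    have "g x = g (y + real_of_int k * (2*pi))" unfolding y_def by simp
    also have "\<dots> = g y" by (rule periodic_int[of g, OF per])
    finally show ?thesis using B y by auto
  qed
  then show ?thesis by (intro bdd_aboveI2) auto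
qed

lemma periodic_integral:
  fixes g :: "real \<Rightarrow> real"
  assumes per: "\<And>x. g (x + 2*pi) = g x" and gi: "\<And>a b. g integrable_on {a..b}"
    and z: "0 \<le> z" "z \<le> 2*pi"
  shows "integral {z..z + 2*pi} g = integral {0..2*pi} g"
proof -
  have c1: "integral {z..2*pi} g + integral {2*pi..z + 2*pi} g = integral {z..z + 2*pi} g"
    by (rule Henstock_Kurzweil_Integration.integral_combine[OF z(2) _ gi]) (use z in simp)
  have c2: "integral {0..z} g + integral {z..2*pi} g = integral {0..2*pi} g"
    by (rule Henstock_Kurzweil_Integration.integral_combine[OF z gi])
  have "integral {2*pi..z + 2*pi} g = integral {2*pi - 2*pi..z + 2*pi - 2*pi} (\<lambda>x. g (x + 2*pi))"
    by (rule integral_shift_real_ivl[symmetric])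
  also have "\<dots> = integral {0..z} g" using per by simp
  finally show ?thesis using c1 c2 by linarith
qed

lemma L_integrable:
  fixes f f1 f2 :: "real \<Rightarrow> real"
  assumes cf: "continuous_on UNIV f" and cf1: "continuous_on UNIV f1" and cf2: "continuous_on UNIV f2"
    and ND: "\<And>x. f x = 0 \<Longrightarrow> f1 x \<noteq> 0"
  shows "(\<lambda>x. if f x \<noteq> 0 \<and> \<bar>f1 x / f x\<bar> \<le> 1 then \<bar>f2 x\<bar> / \<bar>f x\<bar> else 0) integrable_on {a..b}"
proof -
  define C where "C = {x. \<bar>f1 x\<bar> \<le> \<bar>f x\<bar>}"
  define h2 where "h2 = (\<lambda>x. \<bar>f2 x\<bar> / max \<bar>f x\<bar> \<bar>f1 x\<bar>)"
  have mpos: "max \<bar>f x\<bar> \<bar>f1 x\<bar> > 0" for x using ND[of x] by (cases "f x = 0") auto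
  have Cc: "closed C" unfolding C_def by (intro closed_Collect_le continuous_intros cf cf1)
  have ch2: "continuous_on UNIV h2" unfolding h2_def
    using mpos by (intro continuous_intros cf cf1 cf2) (metis less_irrefl)
  have eq: "(if f x \<noteq> 0 \<and> \<bar>f1 x / f x\<bar> \<le> 1 then \<bar>f2 x\<bar> / \<bar>f x\<bar> else 0) = (if x \<in> C then h2 x else 0)" for x
  proof (cases "f x = 0")
    case True
    then show ?thesis using ND[of x] by (simp add: C_def)
  next
    case False
    then show ?thesis by (auto simp: C_def h2_def abs_divide divide_le_eq_1 max_def)
  qed
  have meas: "(\<lambda>x. if x \<in> C then h2 x else 0) \<in> borel_measurable borel"
    by (rule borel_measurable_continuous_on_if[OF borel_closed[OF Cc] continuous_on_subset[OF ch2] continuous_on_const]) auto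
  have meas': "(\<lambda>x. if x \<in> C then h2 x else 0) \<in> borel_measurable (lebesgue_on {a..b})"
    using meas by (metis measurable_lborel2 measurable_restrict_space1 measurable_completion)
  have "(\<lambda>x. if x \<in> C then h2 x else 0) integrable_on {a..b}"
  proof (rule measurable_bounded_by_integrable_imp_integrable_real[OF meas'])
    show "h2 integrable_on {a..b}" by (rule integrable_continuous_real[OF continuous_on_subset[OF ch2]]) auto
    show "\<bar>if x \<in> C then h2 x else 0\<bar> \<le> h2 x" for x using mpos[of x] by (auto simp: h2_def)
    show "{a..b} \<in> sets lebesgue" by simp
  qed
  then show ?thesis using eq by simp
qed


lemma count_bound:
  fixes f f1 g :: "real \<Rightarrow> real"
  assumes D1: "\<And>x. (f has_real_derivative f1 x) (at x)"
    and cf1: "continuous_on UNIV f1"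
    and ND: "\<And>x. f x = 0 \<Longrightarrow> f1 x \<noteq> 0"
    and per: "\<And>x. f (x + 2*pi) = f x"
    and g0: "\<And>x. 0 \<le> g x" and gper: "\<And>x. g (x + 2*pi) = g x"
    and gi: "\<And>a b. g integrable_on {a..b}"
    and step: "\<And>u v. u < v \<Longrightarrow> f u = 0 \<Longrightarrow> f v = 0 \<Longrightarrow> (\<forall>x\<in>{u<..<v}. f x \<noteq> 0)
                 \<Longrightarrow> c \<le> (v - u) + integral {u..v} g"
  shows "real (card (zero_set f)) * c \<le> 2*pi + integral {0..2*pi} g"
proof -
  define S where "S = zero_set f"
  have fin: "finite S"
    by (rule finite_subset[OF _ finite_zeros[OF D1 cf1 ND, of 0 "2*pi"]]) (auto simp: S_def zero_set_def)
  have I0: "0 \<le> integral {0..2*pi} g" by (rule integral_nonneg[OF gi g0])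
  show ?thesis
  proof (cases "S = {}")
    case True
    then show ?thesis using I0 pi_gt_zero unfolding S_def[symmetric] by simp
  next
    case False
    define z0 where "z0 = Min S"
    have z0S: "z0 \<in> S" unfolding z0_def using fin False by simp
    have z0: "0 \<le> z0" "z0 < 2*pi" "f z0 = 0" using z0S by (auto simp: S_def zero_set_def)
    have Smin: "\<And>y. y \<in> S \<Longrightarrow> z0 \<le> y" unfolding z0_def using fin by simp
    have Sb: "\<And>y. y \<in> S \<Longrightarrow> 0 \<le> y \<and> y < 2*pi \<and> f y = 0" by (auto simp: S_def zero_set_def)
    define Z where "Z = insert (z0 + 2*pi) S"
    have notin: "z0 + 2*pi \<notin> S" using Sb z0 by force
    have finZ: "finite Z" using fin by (simp add: Z_def)
    have cardZ: "card Z = Suc (card S)" using fin notin by (simp add: Z_def)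
    have minZ: "Min Z = z0"
      by (rule Min_eqI[OF finZ]) (use Smin z0S z0 in \<open>auto simp: Z_def\<close>)
    have maxZ: "Max Z = z0 + 2*pi"
      by (rule Max_eqI[OF finZ]) (use Sb z0 in \<open>force simp: Z_def\<close>)+
    have Zzero: "\<And>y. y \<in> Z \<Longrightarrow> f y = 0" using Sb z0 per[of z0] by (auto simp: Z_def)
    have Zrange: "\<And>y. y \<in> Z \<Longrightarrow> z0 \<le> y \<and> y \<le> z0 + 2*pi" using Smin Sb z0 by (force simp: Z_def)
    have "real (card S) * c \<le> (Max Z - Min Z) + integral {Min Z..Max Z} g"
    proof (rule sum_consec[OF finZ cardZ])
      fix u v assume uv: "u \<in> Z" "v \<in> Z" "u < v" "\<forall>z\<in>Z. z \<le> u \<or> v \<le> z"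
      have "\<forall>x\<in>{u<..<v}. f x \<noteq> 0"
      proof (intro ballI notI)
        fix x assume x: "x \<in> {u<..<v}" "f x = 0"
        have xr: "z0 < x" "x < z0 + 2*pi" using x Zrange[OF uv(1)] Zrange[OF uv(2)] by auto
        show False
        proof (cases "x < 2*pi")
          case True
          then have "x \<in> Z" using xr z0 x by (auto simp: Z_def S_def zero_set_def)
          then show False using uv(4) x by force
        next
          case False
          have "f (x - 2*pi) = 0" using per[of "x - 2*pi"] x by simp
          then have "x - 2*pi \<in> S" using False xr z0 by (auto simp: S_def zero_set_def)
          then show False using Smin xr by force
        qed
      qed
      then show "c \<le> (v - u) + integral {u..v} g" using step[OF uv(3) Zzero[OF uv(1)] Zzero[OF uv(2)]] by blast
    next
      show "g integrable_on {Min Z..Max Z}" by (rule gi)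
    qed
    also have "\<dots> = 2*pi + integral {z0..z0 + 2*pi} g" unfolding minZ maxZ by simp
    also have "\<dots> = 2*pi + integral {0..2*pi} g" using periodic_integral[of g, OF gper gi] z0 by simp
    finally show ?thesis unfolding S_def .
  qed
qed


theorem corollary2:
  fixes f :: "real \<Rightarrow> real"
  assumes "periodic_2pi f" and "C2 f" and "eta_min f > 0"
  shows "finite (zero_set f)
    \<and> (\<lambda>x. \<bar>deriv (deriv f) x\<bar> / eta f x) integrable_on {0..2*pi}
    \<and> real (card (zero_set f))
        \<le> (1/pi) * integral {0..2*pi} (\<lambda>x. \<bar>deriv (deriv f) x\<bar> / eta f x) + 2
    \<and> (1/pi) * integral {0..2*pi} (\<lambda>x. \<bar>deriv (deriv f) x\<bar> / eta f x) + 2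
        \<le> 2 * (sup_norm (deriv (deriv f)) / eta_min f + 1)
    \<and> log_integrand f integrable_on {0..2*pi}
    \<and> real (card (zero_set f))
        \<le> (1/2) * integral {0..2*pi} (log_integrand f) + pi"
proof -
  define f1 where "f1 = deriv f"
  define f2 where "f2 = deriv f1"
  have per: "\<And>x. f (x + 2*pi) = f x" using assms(1) unfolding periodic_2pi_def by blast
  have D1: "\<And>x. (f has_real_derivative f1 x) (at x)"
    using assms(2) unfolding C2_def f1_def by (simp add: DERIV_deriv_iff_real_differentiable)
  have D2: "\<And>x. (f1 has_real_derivative f2 x) (at x)"
    using assms(2) unfolding C2_def f1_def f2_def by (simp add: DERIV_deriv_iff_real_differentiable)
  have cf2: "continuous_on UNIV f2" using assms(2) unfolding C2_def f1_def f2_def by simp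
  have cf: "continuous_on UNIV f" using D1 by (meson DERIV_isCont continuous_at_imp_continuous_on)
  have cf1: "continuous_on UNIV f1" using D2 by (meson DERIV_isCont continuous_at_imp_continuous_on)
  have etaeq: "\<And>x. eta f x = sqrt ((f x)^2 + (f1 x)^2)" by (simp add: eta_def f1_def)
  have bddeta: "bdd_below (range (eta f))" by (rule bdd_belowI[of _ 0]) (auto simp: eta_def)
  have etamin: "\<And>x. eta_min f \<le> eta f x"
    unfolding eta_min_def by (rule cInf_lower[OF _ bddeta]) simp
  have etapos: "\<And>x. eta f x > 0" using etamin assms(3) by (meson less_le_trans)
  have ND: "\<And>x. f x = 0 \<Longrightarrow> f1 x \<noteq> 0"
  proof
    fix x assume "f x = 0" "f1 x = 0"
    then have "eta f x = 0" by (simp add: etaeq)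
    then show False using etapos[of x] by simp
  qed
  have per1: "\<And>x. f1 (x + 2*pi) = f1 x" by (rule periodic_deriv[OF per D1])
  have per2: "\<And>x. f2 (x + 2*pi) = f2 x" by (rule periodic_deriv[OF per1 D2])
  define g1 where "g1 = (\<lambda>x. \<bar>f2 x\<bar> / eta f x)"
  have g1eq: "g1 = (\<lambda>x. \<bar>f2 x\<bar> / sqrt ((f x)^2 + (f1 x)^2))" unfolding g1_def etaeq ..
  have cg1: "continuous_on UNIV g1" unfolding g1eq
    using etapos by (intro continuous_intros cf cf1 cf2) (metis etaeq less_irrefl)
  have g1i: "\<And>a b. g1 integrable_on {a..b}"
    by (rule integrable_continuous_real[OF continuous_on_subset[OF cg1]]) auto
  have g10: "\<And>x. 0 \<le> g1 x" unfolding g1_def using etapos by (simp add: less_imp_le)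
  have g1per: "\<And>x. g1 (x + 2*pi) = g1 x" unfolding g1eq using per per1 per2 by simp
  define I where "I = integral {0..2*pi} g1"
  define N where "N = real (card (zero_set f))"
  have fin: "finite (zero_set f)"
    by (rule finite_subset[OF _ finite_zeros[OF D1 cf1 ND, of 0 "2*pi"]]) (auto simp: zero_set_def)
  have b1: "N * pi \<le> 2*pi + I" unfolding N_def I_def
  proof (rule count_bound[OF D1 cf1 ND per g10 g1per g1i])
    fix u v assume "u < v" "f u = 0" "f v = 0" "\<forall>x\<in>{u<..<v}. f x \<noteq> 0"
    then show "pi \<le> (v - u) + integral {u..v} g1"
      unfolding g1eq using part1_interval[OF D1 D2 cf2 ND] by blast
  qed
  have r1: "N \<le> (1/pi) * I + 2"
  proof -
    have "N * pi \<le> (I/pi + 2) * pi" using b1 by (simp add: algebra_simps)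
    then show ?thesis using pi_gt_zero by (simp add: mult_right_le_imp_le)
  qed
  define L where "L = log_integrand f"
  have Leq: "L = (\<lambda>x. if f x \<noteq> 0 \<and> \<bar>f1 x / f x\<bar> \<le> 1 then \<bar>f2 x\<bar> / \<bar>f x\<bar> else 0)"
    unfolding L_def f2_def f1_def by (simp add: log_integrand_def fun_eq_iff)
  have Li: "\<And>a b. L integrable_on {a..b}" unfolding Leq by (rule L_integrable[OF cf cf1 cf2 ND])
  have L0: "\<And>x. 0 \<le> L x" unfolding Leq by simp
  have Lper: "\<And>x. L (x + 2*pi) = L x" unfolding Leq using per per1 per2 by simp
  define J where "J = integral {0..2*pi} L"
  have b2: "N * 2 \<le> 2*pi + J" unfolding N_def J_def
  proof (rule count_bound[OF D1 cf1 ND per L0 Lper Li])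
    fix u v assume h: "u < v" "f u = 0" "f v = 0" "\<forall>x\<in>{u<..<v}. f x \<noteq> 0"
    show "2 \<le> (v - u) + integral {u..v} L"
      unfolding Leq by (rule part2_interval[OF D1 D2 ND h(1,2,3)]) (use h(4) Li[unfolded Leq] in auto)
  qed
  have r2: "N \<le> (1/2) * J + pi" using b2 by simp
  define S where "S = sup_norm f2"
  have bddf2: "bdd_above (range (\<lambda>x. \<bar>f2 x\<bar>))" by (rule periodic_bdd[OF per2 cf2])
  have f2S: "\<And>x. \<bar>f2 x\<bar> \<le> S" unfolding S_def sup_norm_def by (rule cSup_upper[OF _ bddf2]) simp
  have S0: "0 \<le> S" using f2S[of 0] by linarith
  have pw: "g1 x \<le> S / eta_min f" for x
  proof -
    have "g1 x \<le> S / eta f x" unfolding g1_def using f2S[of x] etapos[of x] by (simp add: divide_right_mono)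
    also have "\<dots> \<le> S / eta_min f" using S0 etamin[of x] assms(3) by (simp add: divide_left_mono)
    finally show ?thesis .
  qed
  have "I \<le> integral {0..2*pi} (\<lambda>x. S / eta_min f)" unfolding I_def
    by (rule integral_le[OF g1i _ pw]) (rule integrable_const_ivl)
  also have "\<dots> = 2*pi * (S / eta_min f)" by simp
  finally have "I \<le> 2*pi * (S / eta_min f)" .
  then have r3: "(1/pi) * I + 2 \<le> 2 * (S / eta_min f + 1)" using pi_gt_zero
    by (simp add: field_simps)
  show ?thesis
    using fin g1i[of 0 "2*pi"] r1 r3 Li[of 0 "2*pi"] r2
    unfolding N_def I_def J_def S_def L_def g1_def f2_def f1_def by auto
qed

end
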